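(* Let $\alpha>0$ and let $I^\alpha(\mathrm P)$ be the function on $\mathbb R^d$ with Fourier transform $\xi\mapsto|\xi|^\alpha e^{-2\pi|\xi|}$. Then there exists $\sigma>0$ such that the function $s\mapsto(1+|s|^2)^{\frac{d+\sigma}2}\,I^\alpha(\mathrm P)(s)$ belongs to $L_\infty(\mathbb R^d)$.
   Context: Fourier transform convention: $\widehat g(\xi)=\int_{\mathbb R^d}g(s)e^{-2\pi{\rm i}s\cdot\xi}ds$. $\mathrm P$ is the Poisson kernel $\mathrm P(s)=c_d(1+|s|^2)^{-(d+1)/2}$, whose Fourier transform is $e^{-2\pi|\xi|}$, and $I^\alpha$ is the Riesz potential, the Fourier multiplier with symbol $|\xi|^\alpha$. *)

theory Defs
  imports "HOL-Analysis.Analysis"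
begin

text \<open>The function I^alpha(P) on R^d (R^d modelled by a euclidean_space type 'a,
  d = DIM('a)), defined by Fourier inversion of its (integrable) Fourier transform
  xi |-> |xi|^alpha * exp(-2 pi |xi|), with convention ghat(xi) = int g(s) e^(-2 pi i s.xi) ds.\<close>
definition riesz_poisson :: "real \<Rightarrow> 'a::euclidean_space \<Rightarrow> complex" where
  "riesz_poisson \<alpha> s =
     (LINT \<xi>|lborel. complex_of_real (norm \<xi> powr \<alpha> * exp (- 2 * pi * norm \<xi>))
                      * exp (2 * pi * \<i> * complex_of_real (s \<bullet> \<xi>)))"

end

theory Submission
  imports Defs
begin


lemma dyadic_ex:
  fixes a r :: real assumes "a > 0" "a \<le> r"
  shows "\<exists>j::nat. 2^j * a \<le> r \<and> r < 2^(Suc j) * a"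
proof -
  obtain n :: nat where n: "r / a < 2 ^ n" using real_arch_pow[of 2 "r/a"] by auto
  hence "\<exists>n. r < 2^n * a" using assms by (auto simp: field_simps)
  define m where "m = (LEAST n::nat. r < 2^n * a)"
  have m: "r < 2^m * a" unfolding m_def by (rule LeastI_ex) fact
  have "m \<noteq> 0" using m assms by (cases m) auto
  then obtain j where j: "m = Suc j" by (cases m) auto
  have "\<not> r < 2^j * a" using not_less_Least[of j "\<lambda>n. r < 2^n * a"] j m_def by auto
  thus ?thesis using m j by (intro exI[of _ j]) auto
qed

lemma geom_identity:
  fixes a \<beta> :: real and d j :: nat assumes "a > 0"
  shows "(2^(Suc j) * a)^d * (2^j * a) powr (-\<beta>) = 2^d * a powr (real d - \<beta>) * (2 powr (real d - \<beta>))^j"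
proof -
  have "(2^(Suc j) * a)^d = (2^(Suc j) * a) powr real d" using assms by (simp add: powr_realpow)
  also have "\<dots> = 2 powr real d * (2^j * a) powr real d"
    using assms by (simp add: powr_mult[symmetric] mult.assoc)
  finally have e1: "(2^(Suc j) * a)^d = 2 powr real d * (2^j * a) powr real d" .
  have "(2^j * a) powr real d * (2^j * a) powr (-\<beta>) = (2^j*a) powr (real d - \<beta>)"
    by (simp add: powr_add[symmetric])
  also have "\<dots> = (2 powr (real d - \<beta>))^j * a powr (real d - \<beta>)"
    using assms by (simp add: powr_mult powr_realpow[symmetric] powr_powr mult.commute)
  finally show ?thesis using e1 by (simp add: powr_realpow)
qed

lemma tail_nn:
  fixes a \<beta> :: real
  assumes b: "\<beta> > real DIM('a::euclidean_space)" and a: "a > 0"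
  shows "(\<integral>\<^sup>+\<xi>. indicator {\<xi>::'a. a \<le> norm \<xi>} \<xi> * ennreal (norm \<xi> powr (-\<beta>)) \<partial>lborel)
     \<le> ennreal (unit_ball_vol (DIM('a)) * 2^DIM('a) / (1 - 2 powr (real DIM('a) - \<beta>)) * a powr (real DIM('a) - \<beta>))"
proof -
  let ?d = "DIM('a)"
  define q where "q = 2 powr (real ?d - \<beta>)"
  have q0: "0 < q" using b by (auto simp: q_def)
  have "2 powr (real ?d - \<beta>) < 2 powr 0" using b by (intro powr_less_mono) auto
  hence q1: "q < 1" by (simp add: q_def)
  define V where "V = unit_ball_vol (real ?d)"
  have V0: "V \<ge> 0" unfolding V_def by (simp add: unit_ball_vol_nonneg)
  define g where "g j \<xi> = ennreal ((2^j * a) powr (-\<beta>)) * indicator (cball (0::'a) (2^(Suc j) * a)) \<xi>" for j \<xi>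
  have pt: "indicator {\<xi>::'a. a \<le> norm \<xi>} \<xi> * ennreal (norm \<xi> powr (-\<beta>)) \<le> (\<Sum>j. g j \<xi>)" for \<xi>
  proof (cases "a \<le> norm \<xi>")
    case True
    then obtain j where j: "2^j * a \<le> norm \<xi>" "norm \<xi> < 2^(Suc j) * a" using dyadic_ex a by blast
    have "norm \<xi> powr (-\<beta>) \<le> (2^j * a) powr (-\<beta>)"
      using j a b by (intro powr_mono2') auto
    hence "indicator {\<xi>::'a. a \<le> norm \<xi>} \<xi> * ennreal (norm \<xi> powr (-\<beta>)) \<le> g j \<xi>"
      using True j by (auto simp: g_def)
    also have "g j \<xi> \<le> (\<Sum>j. g j \<xi>)"
      using sum_le_suminf[OF summableI, of "{j}" "\<lambda>j. g j \<xi>"] by simp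
    finally show ?thesis .
  qed simp
  have "(\<integral>\<^sup>+\<xi>. indicator {\<xi>::'a. a \<le> norm \<xi>} \<xi> * ennreal (norm \<xi> powr (-\<beta>)) \<partial>lborel)
      \<le> (\<integral>\<^sup>+\<xi>. (\<Sum>j. g j \<xi>) \<partial>lborel)"
    by (intro nn_integral_mono pt)
  also have "\<dots> = (\<Sum>j. \<integral>\<^sup>+\<xi>. g j \<xi> \<partial>lborel)"
    by (rule nn_integral_suminf) (unfold g_def, intro borel_measurable_times_ennreal borel_measurable_indicator, auto)
  also have "(\<lambda>j. \<integral>\<^sup>+\<xi>. g j \<xi> \<partial>lborel) = (\<lambda>j. ennreal (V * 2^?d * a powr (real ?d - \<beta>) * q^j))"
  proof
    fix j
    have "(\<integral>\<^sup>+\<xi>. g j \<xi> \<partial>lborel) = ennreal ((2^j * a) powr (-\<beta>)) * emeasure lborel (cball (0::'a) (2^(Suc j) * a))"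
      unfolding g_def by (simp add: nn_integral_cmult_indicator)
    also have "\<dots> = ennreal ((2^j * a) powr (-\<beta>) * (V * (2^(Suc j) * a)^?d))"
      using a by (simp add: emeasure_cball V_def ennreal_mult')
    also have "(2^j * a) powr (-\<beta>) * (V * (2^(Suc j) * a)^?d) = V * 2^?d * a powr (real ?d - \<beta>) * q^j"
      using geom_identity[OF a, of j ?d \<beta>] by (simp add: q_def mult_ac)
    finally show "(\<integral>\<^sup>+\<xi>. g j \<xi> \<partial>lborel) = ennreal (V * 2^?d * a powr (real ?d - \<beta>) * q^j)" .
  qed
  also have "(\<Sum>j. ennreal (V * 2^?d * a powr (real ?d - \<beta>) * q^j)) = ennreal (\<Sum>j. V * 2^?d * a powr (real ?d - \<beta>) * q^j)"
    using q0 q1 V0 by (intro suminf_ennreal2) (auto intro!: summable_mult summable_geometric)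
  also have "(\<Sum>j. V * 2^?d * a powr (real ?d - \<beta>) * q^j) = V * 2^?d * a powr (real ?d - \<beta>) * (1 / (1 - q))"
    using q0 q1 by (subst suminf_mult) (auto simp: suminf_geometric)
  finally show ?thesis using q1 by (simp add: V_def q_def divide_simps mult_ac)
qed



lemma powr_exp_bound:
  fixes \<gamma> :: real assumes "\<gamma> \<ge> 0"
  shows "\<exists>C. \<forall>r\<ge>0. r powr \<gamma> * exp (- pi * r) \<le> C"
proof -
  define N where "N = Suc (nat \<lceil>\<gamma>\<rceil>)"
  have N0: "N > 0" by (simp add: N_def)
  have gN: "\<gamma> \<le> real N" unfolding N_def by linarith
  show ?thesis
  proof (intro exI[of _ "max 1 ((real N / pi)^N)"] allI impI)
    fix r :: real assume r: "r \<ge> 0"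
    show "r powr \<gamma> * exp (- pi * r) \<le> max 1 ((real N / pi)^N)"
    proof (cases "r \<le> 1")
      case True
      have "r powr \<gamma> \<le> 1" using True r assms by (intro powr_le1) auto
      moreover have "exp (- pi * r) \<le> 1" using r by simp
      ultimately have "r powr \<gamma> * exp (- pi * r) \<le> 1 * 1"
        by (intro mult_mono) auto
      thus ?thesis by simp
    next
      case False
      hence "r powr \<gamma> \<le> r powr real N" using gN by (intro powr_mono) auto
      also have "\<dots> = r ^ N" using False by (simp add: powr_realpow)
      finally have a: "r powr \<gamma> \<le> r ^ N" .
      have "(1 + pi * r / real N) ^ N \<le> exp (pi * r)"
        using N0 r pi_gt_zero by (intro exp_ge_one_plus_x_over_n_power_n) (auto intro: order.trans[of _ 0])
      moreover have "(pi * r / real N) ^ N \<le> (1 + pi * r / real N) ^ N"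
        using r by (intro power_mono) auto
      ultimately have b: "(pi * r / real N) ^ N \<le> exp (pi * r)" by linarith
      have "r ^ N = (real N / pi)^N * (pi * r / real N) ^ N"
        using N0 by (simp add: power_mult_distrib[symmetric])
      also have "\<dots> \<le> (real N / pi)^N * exp (pi * r)" using b by (intro mult_left_mono) auto
      finally have "r powr \<gamma> \<le> (real N / pi)^N * exp (pi * r)" using a by linarith
      hence "r powr \<gamma> * exp (- pi * r) \<le> (real N / pi)^N * exp (pi * r) * exp (- pi * r)"
        by (intro mult_right_mono) auto
      also have "\<dots> = (real N / pi)^N" by (simp add: exp_minus field_simps)
      finally show ?thesis by simp
    qed
  qed
qed

lemma expdecay_nn_finite:
  fixes \<alpha> :: real assumes a: "\<alpha> \<ge> 0"
  shows "(\<integral>\<^sup>+\<xi>. ennreal (norm \<xi> powr \<alpha> * exp (-pi*norm \<xi>)) \<partial>(lborel::'a::euclidean_space measure)) < \<infinity>"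
proof -
  let ?d = "DIM('a)"
  obtain C0 where C0: "\<And>r. r \<ge> 0 \<Longrightarrow> r powr (\<alpha> + ?d + 1) * exp (- pi * r) \<le> C0"
    using powr_exp_bound[of "\<alpha> + ?d + 1"] a by auto
  define C where "C = max C0 0"
  have C: "\<And>r. r \<ge> 0 \<Longrightarrow> r powr (\<alpha> + ?d + 1) * exp (- pi * r) \<le> C" "C \<ge> 0"
    using C0 by (auto simp: C_def intro: order.trans[OF _ max.cobounded1])
  have pt: "ennreal (norm \<xi> powr \<alpha> * exp (-pi*norm \<xi>)) \<le>
      indicator (cball (0::'a) 1) \<xi> + ennreal C * (indicator {\<xi>::'a. 1 \<le> norm \<xi>} \<xi> * ennreal (norm \<xi> powr (-(real ?d + 1))))" for \<xi> :: 'a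
  proof (cases "norm \<xi> \<le> 1")
    case True
    have "norm \<xi> powr \<alpha> \<le> 1" using True a by (intro powr_le1) auto
    moreover have "exp (-pi*norm \<xi>) \<le> 1" by simp
    ultimately have "norm \<xi> powr \<alpha> * exp (-pi*norm \<xi>) \<le> 1 * 1" by (intro mult_mono) auto
    hence "ennreal (norm \<xi> powr \<alpha> * exp (-pi*norm \<xi>)) \<le> 1" by (simp add: ennreal_le_1)
    also have "(1::ennreal) = indicator (cball (0::'a) 1) \<xi>" using True by simp
    finally show ?thesis by (rule order.trans) simp
  next
    case False
    hence r: "norm \<xi> > 1" by simp
    have "norm \<xi> powr \<alpha> * exp (-pi*norm \<xi>) = (norm \<xi> powr (\<alpha> + ?d + 1) * exp (- pi * norm \<xi>)) * norm \<xi> powr (-(real ?d + 1))"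
      using r by (simp add: powr_add[symmetric])
    also have "\<dots> \<le> C * norm \<xi> powr (-(real ?d + 1))"
      using C(1)[of "norm \<xi>"] by (intro mult_right_mono) auto
    finally have "ennreal (norm \<xi> powr \<alpha> * exp (-pi*norm \<xi>)) \<le> ennreal C * ennreal (norm \<xi> powr (-(real ?d + 1)))"
      using C(2) by (simp add: ennreal_mult'[symmetric] ennreal_leI)
    also have "\<dots> = ennreal C * (indicator {\<xi>::'a. 1 \<le> norm \<xi>} \<xi> * ennreal (norm \<xi> powr (-(real ?d + 1))))"
      using r by simp
    finally show ?thesis by (rule order.trans) simp
  qed
  have "(\<integral>\<^sup>+\<xi>. ennreal (norm \<xi> powr \<alpha> * exp (-pi*norm \<xi>)) \<partial>(lborel::'a measure))
     \<le> (\<integral>\<^sup>+\<xi>. indicator (cball (0::'a) 1) \<xi> + ennreal C * (indicator {\<xi>::'a. 1 \<le> norm \<xi>} \<xi> * ennreal (norm \<xi> powr (-(real ?d + 1)))) \<partial>lborel)"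
    by (intro nn_integral_mono pt)
  also have "\<dots> = emeasure lborel (cball (0::'a) 1) + ennreal C * (\<integral>\<^sup>+\<xi>. indicator {\<xi>::'a. 1 \<le> norm \<xi>} \<xi> * ennreal (norm \<xi> powr (-(real ?d + 1))) \<partial>lborel)"
  proof -
    have m1: "(\<lambda>\<xi>. indicator (cball (0::'a) 1) \<xi> :: ennreal) \<in> borel_measurable lborel"
      by (intro borel_measurable_indicator) auto
    have m3: "(\<lambda>\<xi>::'a. indicator {\<xi>::'a. 1 \<le> norm \<xi>} \<xi> * ennreal (norm \<xi> powr (-(real ?d + 1)))) \<in> borel_measurable lborel"
      by measurable
    have m2: "(\<lambda>\<xi>::'a. ennreal C * (indicator {\<xi>::'a. 1 \<le> norm \<xi>} \<xi> * ennreal (norm \<xi> powr (-(real ?d + 1))))) \<in> borel_measurable lborel"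
      using m3 by (rule borel_measurable_times_ennreal[OF borel_measurable_const])
    show ?thesis
      by (simp only: nn_integral_add[OF m1 m2] nn_integral_cmult[OF m3]) (simp add: nn_integral_indicator)
  qed
  also have "\<dots> < \<infinity>"
  proof -
    have "(\<integral>\<^sup>+\<xi>. indicator {\<xi>::'a. 1 \<le> norm \<xi>} \<xi> * ennreal (norm \<xi> powr (-(real ?d + 1))) \<partial>lborel) < \<infinity>"
      using tail_nn[of "real ?d + 1" 1, where 'a='a] by (auto intro: le_less_trans)
    thus ?thesis using emeasure_lborel_cball_finite[of "0::'a" 1] by (simp add: ennreal_mult_less_top)
  qed
  finally show ?thesis .
qed



fun dif :: "real \<Rightarrow> nat \<Rightarrow> (real \<Rightarrow> real) \<Rightarrow> real \<Rightarrow> real" where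
  "dif t 0 h x = h x"
| "dif t (Suc k) h x = dif t k h (x + t) - dif t k h x"

lemma dif_shift: "dif t k h (x + y) = dif t k (\<lambda>\<tau>. h (\<tau> + y)) x"
proof (induction k arbitrary: x)
  case (Suc k)
  have "dif t k h (x + t + y) = dif t k (\<lambda>\<tau>. h (\<tau> + y)) (x + t)" by (rule Suc.IH)
  then show ?case using Suc.IH[of x] by (simp add: algebra_simps)
qed simp

lemma dif_bound0:
  assumes "t \<ge> 0" "\<And>y. x \<le> y \<Longrightarrow> y \<le> x + real k * t \<Longrightarrow> \<bar>h y\<bar> \<le> M"
  shows "\<bar>dif t k h x\<bar> \<le> 2^k * M"
  using assms(2)
proof (induction k arbitrary: x)
  case 0
  then show ?case by simp
next
  case (Suc k)
  have "\<bar>dif t k h (x + t)\<bar> \<le> 2^k * M"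
    using Suc.prems assms(1) by (intro Suc.IH) (auto simp: algebra_simps)
  moreover have "\<bar>dif t k h x\<bar> \<le> 2^k * M"
    using Suc.prems assms(1) by (intro Suc.IH) (auto simp: algebra_simps intro: order.trans)
  ultimately show ?case by simp
qed

lemma dif_deriv:
  assumes "\<And>i j. j \<le> k \<Longrightarrow> (G i has_real_derivative G (Suc i) (y + real j * t)) (at (y + real j * t))"
  shows "((\<lambda>x. dif t k (G i) x) has_real_derivative dif t k (G (Suc i)) y) (at y)"
  using assms
proof (induction k arbitrary: y)
  case 0
  then show ?case using "0.prems"[of 0 i] by simp
next
  case (Suc k)
  have d1: "((\<lambda>x. dif t k (G i) x) has_real_derivative dif t k (G (Suc i)) (y + t)) (at (y + t))"
    using Suc.prems[of "Suc _"] by (intro Suc.IH) (auto simp: algebra_simps)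
  have d2: "((\<lambda>x. dif t k (G i) x) has_real_derivative dif t k (G (Suc i)) y) (at y)"
    using Suc.prems by (intro Suc.IH) auto
  have d1': "((\<lambda>x. dif t k (G i) (x + t)) has_real_derivative dif t k (G (Suc i)) (y + t)) (at y)"
    using d1 by (simp add: DERIV_shift)
  show ?case using DERIV_diff[OF d1' d2] by simp
qed

lemma dif_mvt:
  assumes "t \<ge> 0"
    and "\<And>i y. x \<le> y \<Longrightarrow> y \<le> x + real k * t \<Longrightarrow> (G i has_real_derivative G (Suc i) y) (at y)"
    and "\<And>y. x \<le> y \<Longrightarrow> y \<le> x + real k * t \<Longrightarrow> \<bar>G (i + k) y\<bar> \<le> M"
  shows "\<bar>dif t k (G i) x\<bar> \<le> t^k * M"
  using assms(2,3)
proof (induction k arbitrary: i x)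
  case 0
  then show ?case by simp
next
  case (Suc k)
  show ?case
  proof (cases "t = 0")
    case True
    then show ?thesis by simp
  next
    case False
    hence t: "t > 0" using assms(1) by simp
    have der: "((\<lambda>x. dif t k (G i) x) has_real_derivative dif t k (G (Suc i)) w) (at w)"
      if "x \<le> w" "w \<le> x + t" for w
    proof (rule dif_deriv)
      fix i' j assume "j \<le> k"
      hence h1: "real j * t \<le> real k * t" using t by (intro mult_right_mono) auto
      have h2: "0 \<le> real j * t" using t by simp
      have "x \<le> w + real j * t" using h2 that by linarith
      moreover have "w + real j * t \<le> x + real (Suc k) * t"
        using h1 that by (simp add: distrib_right)
      ultimately
      show "(G i' has_real_derivative G (Suc i') (w + real j * t)) (at (w + real j * t))"
        by (intro Suc.prems(1))
    qed
    obtain z where z: "x < z" "z < x + t"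
      "dif t k (G i) (x + t) - dif t k (G i) x = (x + t - x) * dif t k (G (Suc i)) z"
      using MVT2[of x "x + t" "\<lambda>x. dif t k (G i) x" "\<lambda>w. dif t k (G (Suc i)) w"] der t by auto
    have "\<bar>dif t k (G (Suc i)) z\<bar> \<le> t^k * M"
    proof (rule Suc.IH)
      fix i' y assume "z \<le> y" "y \<le> z + real k * t"
      thus "(G i' has_real_derivative G (Suc i') y) (at y)"
        using z by (intro Suc.prems(1)) (auto simp: algebra_simps)
    next
      fix y assume "z \<le> y" "y \<le> z + real k * t"
      thus "\<bar>G (Suc i + k) y\<bar> \<le> M"
        using z Suc.prems(2)[of y] by (auto simp: algebra_simps)
    qed
    hence "\<bar>t * dif t k (G (Suc i)) z\<bar> \<le> t * (t^k * M)"
      using t by (simp add: abs_mult mult_left_mono)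
    thus ?thesis using z(3) by simp
  qed
qed



definition rho :: "'a::euclidean_space \<Rightarrow> 'a \<Rightarrow> real \<Rightarrow> real" where
  "rho \<xi> u \<tau> = norm (\<xi> + \<tau> *\<^sub>R u)"
definition pp :: "'a::euclidean_space \<Rightarrow> 'a \<Rightarrow> real \<Rightarrow> real" where
  "pp \<xi> u \<tau> = (\<xi> + \<tau> *\<^sub>R u) \<bullet> u"

lemma rho_deriv:
  fixes \<xi> u :: "'a::euclidean_space"
  assumes nz: "\<xi> + \<tau> *\<^sub>R u \<noteq> 0"
  shows "(rho \<xi> u has_real_derivative (pp \<xi> u \<tau> / rho \<xi> u \<tau>)) (at \<tau>)"
proof -
  have l: "((\<lambda>\<tau>. \<xi> + \<tau> *\<^sub>R u) has_derivative (\<lambda>h. h *\<^sub>R u)) (at \<tau>)"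
    by (auto intro!: derivative_eq_intros)
  have "((norm \<circ> (\<lambda>\<tau>. \<xi> + \<tau> *\<^sub>R u)) has_derivative ((\<lambda>y. y \<bullet> sgn (\<xi> + \<tau> *\<^sub>R u)) \<circ> (\<lambda>h. h *\<^sub>R u))) (at \<tau>)"
    by (rule diff_chain_at[OF l has_derivative_norm[OF nz]])
  moreover have "((\<lambda>y. y \<bullet> sgn (\<xi> + \<tau> *\<^sub>R u)) \<circ> (\<lambda>h. h *\<^sub>R u)) = (*) (pp \<xi> u \<tau> / rho \<xi> u \<tau>)"
    by (auto simp: fun_eq_iff pp_def rho_def sgn_div_norm inner_commute divide_inverse mult_ac)
  moreover have "norm \<circ> (\<lambda>\<tau>. \<xi> + \<tau> *\<^sub>R u) = rho \<xi> u" by (auto simp: fun_eq_iff rho_def)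
  ultimately show ?thesis by (simp add: has_field_derivative_def)
qed

lemma pp_deriv:
  fixes \<xi> u :: "'a::euclidean_space"
  assumes "norm u = 1"
  shows "(pp \<xi> u has_real_derivative 1) (at \<tau>)"
proof -
  have "pp \<xi> u = (\<lambda>\<tau>. \<xi> \<bullet> u + \<tau> * (u \<bullet> u))" by (auto simp: fun_eq_iff pp_def inner_add_left)
  moreover have "u \<bullet> u = 1" using assms by (simp add: norm_eq_sqrt_inner)
  ultimately show ?thesis by (auto intro!: derivative_eq_intros)
qed

lemma pp_le: "norm u = 1 \<Longrightarrow> \<bar>pp \<xi> u \<tau>\<bar> \<le> rho \<xi> u \<tau>"
  unfolding pp_def rho_def using Cauchy_Schwarz_ineq2[of "\<xi> + \<tau> *\<^sub>R u" u] by simp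

fun trm :: "'a::euclidean_space \<Rightarrow> 'a \<Rightarrow> real \<times> real \<times> nat \<Rightarrow> real \<Rightarrow> real" where
  "trm \<xi> u (c, \<beta>, m) \<tau> = c * rho \<xi> u \<tau> powr \<beta> * pp \<xi> u \<tau> ^ m * exp (-2*pi*rho \<xi> u \<tau>)"

fun dtr :: "real \<times> real \<times> nat \<Rightarrow> (real \<times> real \<times> nat) list" where
  "dtr (c, \<beta>, m) = [(c*\<beta>, \<beta>-2, Suc m), (c*real m, \<beta>, m - 1), (-2*pi*c, \<beta>-1, Suc m)]"

lemma trm_deriv:
  fixes \<xi> u :: "'a::euclidean_space"
  assumes u: "norm u = 1" and pos: "rho \<xi> u \<tau> > 0"
  shows "(trm \<xi> u tr has_real_derivative sum_list (map (\<lambda>tr'. trm \<xi> u tr' \<tau>) (dtr tr))) (at \<tau>)"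
proof -
  obtain c \<beta> m where tr: "tr = (c, \<beta>, m)" by (cases tr) auto
  define R where "R = rho \<xi> u \<tau>"
  define P where "P = pp \<xi> u \<tau>"
  define E where "E = exp (-2*pi*R)"
  have R0: "R > 0" using pos by (simp add: R_def)
  have nz: "\<xi> + \<tau> *\<^sub>R u \<noteq> 0" using pos by (auto simp: rho_def)
  have dR: "(rho \<xi> u has_real_derivative P / R) (at \<tau>)" unfolding P_def R_def by (rule rho_deriv[OF nz])
  have dP: "(pp \<xi> u has_real_derivative 1) (at \<tau>)" by (rule pp_deriv[OF u])
  have dA: "((\<lambda>\<tau>. c * rho \<xi> u \<tau> powr \<beta>) has_real_derivative c * (\<beta> * R powr (\<beta> - of_nat 1) * (P / R))) (at \<tau>)"
    by (intro DERIV_cmult) (unfold R_def, rule DERIV_fun_powr[OF dR[unfolded R_def] pos])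
  have dB: "((\<lambda>\<tau>. pp \<xi> u \<tau> ^ m) has_real_derivative of_nat m * (1 * P ^ (m - Suc 0))) (at \<tau>)"
    unfolding P_def by (rule DERIV_power[OF dP])
  have dE: "((\<lambda>\<tau>. exp (-2*pi*rho \<xi> u \<tau>)) has_real_derivative E * (-2*pi*(P/R))) (at \<tau>)"
  proof -
    have dR': "(rho \<xi> u has_real_derivative P / rho \<xi> u \<tau>) (at \<tau>)" using dR by (simp add: R_def)
    show ?thesis unfolding E_def R_def by (intro DERIV_fun_exp DERIV_cmult dR')
  qed
  have fe: "trm \<xi> u tr = (\<lambda>\<tau>. c * rho \<xi> u \<tau> powr \<beta> * pp \<xi> u \<tau> ^ m * exp (-2*pi*rho \<xi> u \<tau>))"
    by (auto simp: tr fun_eq_iff)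
  have d: "(trm \<xi> u tr has_real_derivative
      (c * R powr \<beta> * P ^ m) * (E * (-2*pi*(P/R))) + (c * R powr \<beta> * (of_nat m * (1 * P ^ (m - Suc 0))) + c * (\<beta> * R powr (\<beta> - of_nat 1) * (P / R)) * P ^ m) * E) (at \<tau>)"
    unfolding fe using DERIV_mult'[OF DERIV_mult'[OF dA dB] dE] unfolding R_def P_def E_def .
  have r1: "R powr (\<beta> - 1) = R powr \<beta> / R" using R0 by (simp add: powr_diff)
  have r2: "R powr (\<beta> - 2) = R powr \<beta> / R^2" using R0 by (simp add: powr_diff)
  have eq: "(c * R powr \<beta> * P ^ m) * (E * (-2*pi*(P/R))) + (c * R powr \<beta> * (of_nat m * (1 * P ^ (m - Suc 0))) + c * (\<beta> * R powr (\<beta> - of_nat 1) * (P / R)) * P ^ m) * E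
     = sum_list (map (\<lambda>tr'. trm \<xi> u tr' \<tau>) (dtr tr))"
  proof (cases m)
    case 0
    then show ?thesis using R0 by (simp add: tr r1 r2 R_def[symmetric] P_def[symmetric] E_def field_simps power2_eq_square)
  next
    case (Suc m')
    then show ?thesis using R0 by (simp add: tr r1 r2 R_def[symmetric] P_def[symmetric] E_def field_simps power2_eq_square)
  qed
  show ?thesis using d eq by simp
qed

fun Lst :: "real \<Rightarrow> nat \<Rightarrow> (real \<times> real \<times> nat) list" where
  "Lst \<alpha> 0 = [(1, \<alpha>, 0)]"
| "Lst \<alpha> (Suc n) = concat (map dtr (Lst \<alpha> n))"

definition GG :: "real \<Rightarrow> 'a::euclidean_space \<Rightarrow> 'a \<Rightarrow> nat \<Rightarrow> real \<Rightarrow> real" where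
  "GG \<alpha> \<xi> u n \<tau> = sum_list (map (\<lambda>tr. trm \<xi> u tr \<tau>) (Lst \<alpha> n))"

definition AA :: "real \<Rightarrow> nat \<Rightarrow> real" where
  "AA \<alpha> n = sum_list (map (\<lambda>tr. \<bar>fst tr\<bar>) (Lst \<alpha> n))"

lemma list_deriv:
  fixes \<xi> u :: "'a::euclidean_space"
  assumes u: "norm u = 1" and pos: "rho \<xi> u \<tau> > 0"
  shows "((\<lambda>\<tau>. sum_list (map (\<lambda>tr. trm \<xi> u tr \<tau>) xs)) has_real_derivative
           sum_list (map (\<lambda>tr. trm \<xi> u tr \<tau>) (concat (map dtr xs)))) (at \<tau>)"
proof (induction xs)
  case Nil
  then show ?case by simp
next
  case (Cons a xs)
  show ?case using DERIV_add[OF trm_deriv[OF u pos, of a] Cons.IH] by simp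
qed

lemma GG_deriv:
  fixes \<xi> u :: "'a::euclidean_space"
  assumes u: "norm u = 1" and pos: "rho \<xi> u \<tau> > 0"
  shows "(GG \<alpha> \<xi> u n has_real_derivative GG \<alpha> \<xi> u (Suc n) \<tau>) (at \<tau>)"
proof -
  have "GG \<alpha> \<xi> u n = (\<lambda>\<tau>. sum_list (map (\<lambda>tr. trm \<xi> u tr \<tau>) (Lst \<alpha> n)))"
    by (simp add: fun_eq_iff GG_def)
  thus ?thesis using list_deriv[OF u pos, of "Lst \<alpha> n"] by (simp add: GG_def)
qed

lemma Lst_deg: "tr \<in> set (Lst \<alpha> n) \<Longrightarrow> \<alpha> - real n \<le> fst (snd tr) + real (snd (snd tr)) \<and> fst (snd tr) + real (snd (snd tr)) \<le> \<alpha>"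
proof (induction n arbitrary: tr)
  case 0
  then show ?case by auto
next
  case (Suc n)
  then obtain tr0 where tr0: "tr0 \<in> set (Lst \<alpha> n)" "tr \<in> set (dtr tr0)" by auto
  obtain c \<beta> m where e: "tr0 = (c, \<beta>, m)" by (cases tr0) auto
  have ih: "\<alpha> - real n \<le> \<beta> + real m" "\<beta> + real m \<le> \<alpha>" using Suc.IH[OF tr0(1)] e by auto
  show ?case using tr0(2) ih by (cases m) (auto simp: e)
qed

lemma sum_list_abs_bound:
  fixes f g :: "'b \<Rightarrow> real" and B :: real
  assumes "\<And>x. x \<in> set xs \<Longrightarrow> \<bar>f x\<bar> \<le> g x * B"
  shows "\<bar>sum_list (map f xs)\<bar> \<le> sum_list (map g xs) * B"
  using assms
proof (induction xs)
  case (Cons a xs)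
  have "\<bar>f a + sum_list (map f xs)\<bar> \<le> \<bar>f a\<bar> + \<bar>sum_list (map f xs)\<bar>" by (rule abs_triangle_ineq)
  also have "\<dots> \<le> g a * B + sum_list (map g xs) * B" using Cons by (intro add_mono) auto
  finally show ?case by (simp add: distrib_right)
qed simp

lemma powr_between:
  fixes R a b g :: real assumes "R > 0" "a \<le> g" "g \<le> b"
  shows "R powr g \<le> R powr a + R powr b"
proof (cases "R \<le> 1")
  case True
  hence "R powr g \<le> R powr a" using assms by (intro powr_mono') auto
  thus ?thesis by (simp add: add_increasing2)
next
  case False
  hence "R powr g \<le> R powr b" using assms by (intro powr_mono) auto
  thus ?thesis by (simp add: add_increasing)
qed

lemma GG_bound:
  fixes \<xi> u :: "'a::euclidean_space"
  assumes u: "norm u = 1" and pos: "rho \<xi> u \<tau> > 0"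
  shows "\<bar>GG \<alpha> \<xi> u n \<tau>\<bar> \<le> AA \<alpha> n * ((rho \<xi> u \<tau> powr (\<alpha> - real n) + rho \<xi> u \<tau> powr \<alpha>) * exp (-2*pi*rho \<xi> u \<tau>))"
  unfolding GG_def AA_def
proof (rule sum_list_abs_bound)
  fix tr assume tr: "tr \<in> set (Lst \<alpha> n)"
  obtain c \<beta> m where e: "tr = (c, \<beta>, m)" by (cases tr) auto
  define R where "R = rho \<xi> u \<tau>"
  define E where "E = exp (-2*pi*R)"
  have R0: "R > 0" using pos by (simp add: R_def)
  have deg: "\<alpha> - real n \<le> \<beta> + real m" "\<beta> + real m \<le> \<alpha>" using Lst_deg[OF tr] e by auto
  have P: "\<bar>pp \<xi> u \<tau>\<bar> \<le> R" using pp_le[OF u] by (simp add: R_def)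
  have "\<bar>trm \<xi> u tr \<tau>\<bar> = \<bar>c\<bar> * (R powr \<beta> * \<bar>pp \<xi> u \<tau>\<bar> ^ m * E)"
    by (simp add: e R_def E_def abs_mult power_abs)
  also have "\<dots> \<le> \<bar>c\<bar> * (R powr \<beta> * R ^ m * E)"
    using P by (intro mult_left_mono mult_right_mono power_mono) (auto simp: E_def)
  also have "R powr \<beta> * R ^ m = R powr (\<beta> + real m)"
    using R0 by (simp add: powr_add powr_realpow)
  also have "R powr (\<beta> + real m) \<le> R powr (\<alpha> - real n) + R powr \<alpha>"
    using R0 deg by (intro powr_between) auto
  hence "\<bar>c\<bar> * (R powr (\<beta> + real m) * E) \<le> \<bar>c\<bar> * ((R powr (\<alpha> - real n) + R powr \<alpha>) * E)"
    by (intro mult_left_mono mult_right_mono) (auto simp: E_def)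
  finally show "\<bar>trm \<xi> u tr \<tau>\<bar> \<le> \<bar>fst tr\<bar> * ((rho \<xi> u \<tau> powr (\<alpha> - real n) + rho \<xi> u \<tau> powr \<alpha>) * exp (-2*pi*rho \<xi> u \<tau>))"
    by (simp add: e R_def E_def)
qed

lemma GG0: "GG \<alpha> \<xi> u 0 \<tau> = norm (\<xi> + \<tau> *\<^sub>R u) powr \<alpha> * exp (-2*pi*norm (\<xi> + \<tau> *\<^sub>R u))"
  by (simp add: GG_def rho_def)



definition fP :: "real \<Rightarrow> 'a::euclidean_space \<Rightarrow> real" where
  "fP \<alpha> \<xi> = norm \<xi> powr \<alpha> * exp (- 2 * pi * norm \<xi>)"

definition EE :: "'a::euclidean_space \<Rightarrow> 'a \<Rightarrow> complex" where
  "EE s \<xi> = exp (2 * pi * \<i> * complex_of_real (s \<bullet> \<xi>))"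

lemma rp_eq: "riesz_poisson \<alpha> s = (LINT \<xi>|lborel. complex_of_real (fP \<alpha> \<xi>) * EE s \<xi>)"
  by (simp add: riesz_poisson_def fP_def EE_def)

lemma fP_meas[measurable]: "fP \<alpha> \<in> borel_measurable borel"
  unfolding fP_def by measurable

lemma EE_meas[measurable]: "EE s \<in> borel_measurable borel"
  unfolding EE_def by measurable

lemma lborel_transl:
  fixes h :: "'a::euclidean_space \<Rightarrow> complex"
  assumes h: "integrable lborel h"
  shows "integrable lborel (\<lambda>x. h (x + c))" "(LINT x|lborel. h (x + c)) = (LINT x|lborel. h x)"
proof -
  have hm: "h \<in> borel_measurable borel" using borel_measurable_integrable[OF h] by simp
  have D: "distr lborel borel ((+) c) = lborel" by (rule lborel_distr_plus)
  have "integrable (distr lborel borel ((+) c)) h" using h D by simp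
  hence "integrable lborel (\<lambda>x. h (c + x))" using integrable_distr_eq[of "(+) c" lborel borel h] hm by simp
  thus "integrable lborel (\<lambda>x. h (x + c))" by (simp add: add.commute)
  have "integral\<^sup>L (distr lborel borel ((+) c)) h = (LINT x|lborel. h (c + x))"
    by (rule integral_distr) (auto simp: hm)
  thus "(LINT x|lborel. h (x + c)) = (LINT x|lborel. h x)" using D by (simp add: add.commute)
qed

definition Dk :: "real \<Rightarrow> 'a::euclidean_space \<Rightarrow> real \<Rightarrow> nat \<Rightarrow> 'a \<Rightarrow> real" where
  "Dk \<alpha> u t k \<xi> = dif t k (\<lambda>\<tau>. fP \<alpha> (\<xi> + \<tau> *\<^sub>R u)) 0"

lemma Dk_0: "Dk \<alpha> u t 0 \<xi> = fP \<alpha> \<xi>"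
  by (simp add: Dk_def)

lemma Dk_Suc: "Dk \<alpha> u t (Suc k) \<xi> = Dk \<alpha> u t k (\<xi> + t *\<^sub>R u) - Dk \<alpha> u t k \<xi>"
proof -
  have "dif t k (\<lambda>\<tau>. fP \<alpha> (\<xi> + \<tau> *\<^sub>R u)) (0 + t) = dif t k (\<lambda>\<tau>. fP \<alpha> (\<xi> + (\<tau> + t) *\<^sub>R u)) 0"
    by (rule dif_shift)
  also have "(\<lambda>\<tau>. fP \<alpha> (\<xi> + (\<tau> + t) *\<^sub>R u)) = (\<lambda>\<tau>. fP \<alpha> ((\<xi> + t *\<^sub>R u) + \<tau> *\<^sub>R u))"
    by (simp add: scaleR_add_left algebra_simps)
  finally show ?thesis by (simp add: Dk_def)
qed

lemma EE_shift: "EE s (\<xi> + h) = EE s \<xi> * exp (2 * pi * \<i> * complex_of_real (s \<bullet> h))"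
  by (simp add: EE_def inner_add_right distrib_left exp_add)

lemma Dk_integral:
  fixes s u :: "'a::euclidean_space"
  assumes base: "integrable lborel (\<lambda>\<xi>. complex_of_real (fP \<alpha> \<xi>) * EE s \<xi>)"
    and half: "exp (2 * pi * \<i> * complex_of_real (s \<bullet> (t *\<^sub>R u))) = -1"
  shows "integrable lborel (\<lambda>\<xi>. complex_of_real (Dk \<alpha> u t k \<xi>) * EE s \<xi>) \<and>
    (LINT \<xi>|lborel. complex_of_real (Dk \<alpha> u t k \<xi>) * EE s \<xi>) = (-2)^k * (LINT \<xi>|lborel. complex_of_real (fP \<alpha> \<xi>) * EE s \<xi>)"
proof (induction k)
  case 0
  then show ?case using base by (simp add: Dk_0)
next
  case (Suc k)
  define h where "h = (\<lambda>\<xi>. complex_of_real (Dk \<alpha> u t k \<xi>) * EE s \<xi>)"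
  have hi: "integrable lborel h" using Suc.IH by (simp add: h_def)
  have eq: "complex_of_real (Dk \<alpha> u t k (\<xi> + t *\<^sub>R u)) * EE s \<xi> = - h (\<xi> + t *\<^sub>R u)" for \<xi>
    unfolding h_def EE_shift[of s \<xi> "t *\<^sub>R u"] half by simp
  have eq2: "complex_of_real (Dk \<alpha> u t (Suc k) \<xi>) * EE s \<xi> = - h (\<xi> + t *\<^sub>R u) - h \<xi>" for \<xi>
    using eq[of \<xi>] by (simp add: Dk_Suc h_def left_diff_distrib)
  have i1: "integrable lborel (\<lambda>\<xi>. h (\<xi> + t *\<^sub>R u))" by (rule lborel_transl(1)[OF hi])
  have "integrable lborel (\<lambda>\<xi>. - h (\<xi> + t *\<^sub>R u) - h \<xi>)"
    using i1 hi by (intro Bochner_Integration.integrable_diff Bochner_Integration.integrable_minus)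
  moreover have "(LINT \<xi>|lborel. - h (\<xi> + t *\<^sub>R u) - h \<xi>) = - (LINT \<xi>|lborel. h \<xi>) - (LINT \<xi>|lborel. h \<xi>)"
    using i1 hi lborel_transl(2)[OF hi, of "t *\<^sub>R u"] by (simp add: Bochner_Integration.integral_diff[OF Bochner_Integration.integrable_minus[OF i1] hi] Bochner_Integration.integral_minus)
  ultimately show ?case using Suc.IH by (simp add: eq2 h_def)
qed



lemma fP_le: "\<alpha> \<ge> 0 \<Longrightarrow> \<bar>fP \<alpha> x\<bar> \<le> norm x powr \<alpha>"
  unfolding fP_def by (simp add: abs_mult mult_left_le)

lemma Dk_near:
  fixes \<xi> u :: "'a::euclidean_space"
  assumes a: "\<alpha> \<ge> 0" and u: "norm u = 1" and t: "t \<ge> 0"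
  shows "\<bar>Dk \<alpha> u t k \<xi>\<bar> \<le> 2^k * (norm \<xi> + real k * t) powr \<alpha>"
  unfolding Dk_def
proof (rule dif_bound0[OF t])
  fix y assume y: "0 \<le> y" "y \<le> 0 + real k * t"
  have "norm (\<xi> + y *\<^sub>R u) \<le> norm \<xi> + y" using norm_triangle_ineq[of \<xi> "y *\<^sub>R u"] u y by simp
  also have "\<dots> \<le> norm \<xi> + real k * t" using y by simp
  finally have n: "norm (\<xi> + y *\<^sub>R u) \<le> norm \<xi> + real k * t" .
  have "\<bar>fP \<alpha> (\<xi> + y *\<^sub>R u)\<bar> \<le> norm (\<xi> + y *\<^sub>R u) powr \<alpha>" by (rule fP_le[OF a])
  also have "\<dots> \<le> (norm \<xi> + real k * t) powr \<alpha>" using n a by (intro powr_mono2) auto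
  finally show "\<bar>fP \<alpha> (\<xi> + y *\<^sub>R u)\<bar> \<le> (norm \<xi> + real k * t) powr \<alpha>" .
qed

lemma Dk_far:
  fixes \<xi> u :: "'a::euclidean_space"
  assumes a: "\<alpha> \<ge> 0" "\<alpha> \<le> real k" and u: "norm u = 1" and t: "t > 0" and k: "k \<ge> 1"
    and far: "2 * real k * t \<le> norm \<xi>"
  shows "\<bar>Dk \<alpha> u t k \<xi>\<bar> \<le> t^k * (AA \<alpha> k * ((norm \<xi> / 2) powr (\<alpha> - real k) + (2 * norm \<xi>) powr \<alpha> * exp (- pi * norm \<xi>)))"
proof -
  have kt: "0 < real k * t" using t k by simp
  have rb: "norm \<xi> / 2 \<le> rho \<xi> u y \<and> rho \<xi> u y \<le> 2 * norm \<xi>" if y: "0 \<le> y" "y \<le> real k * t" for y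
  proof -
    have "norm \<xi> - y \<le> norm (\<xi> + y *\<^sub>R u)" using norm_triangle_ineq2[of \<xi> "- (y *\<^sub>R u)"] u y by simp
    moreover have "norm (\<xi> + y *\<^sub>R u) \<le> norm \<xi> + y" using norm_triangle_ineq[of \<xi> "y *\<^sub>R u"] u y by simp
    ultimately show ?thesis using far y kt by (simp add: rho_def)
  qed
  have pos: "rho \<xi> u y > 0" if "0 \<le> y" "y \<le> real k * t" for y
    using rb[OF that] far kt by linarith
  have eq: "(\<lambda>\<tau>. fP \<alpha> (\<xi> + \<tau> *\<^sub>R u)) = GG \<alpha> \<xi> u 0"
    by (simp add: fun_eq_iff GG0 fP_def)
  have "\<bar>dif t k (GG \<alpha> \<xi> u 0) 0\<bar> \<le> t^k * (AA \<alpha> k * ((norm \<xi> / 2) powr (\<alpha> - real k) + (2 * norm \<xi>) powr \<alpha> * exp (- pi * norm \<xi>)))"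
  proof (rule dif_mvt)
    show "0 \<le> t" using t by simp
  next
    fix i y assume "0 \<le> y" "y \<le> 0 + real k * t"
    thus "(GG \<alpha> \<xi> u i has_real_derivative GG \<alpha> \<xi> u (Suc i) y) (at y)"
      using pos by (intro GG_deriv u) auto
  next
    fix y assume y: "0 \<le> y" "y \<le> 0 + real k * t"
    define R where "R = rho \<xi> u y"
    have R: "norm \<xi> / 2 \<le> R" "R \<le> 2 * norm \<xi>" "R > 0" using rb[of y] pos[of y] y by (auto simp: R_def)
    have AA0: "AA \<alpha> k \<ge> 0" unfolding AA_def by (intro sum_list_nonneg) auto
    have "\<bar>GG \<alpha> \<xi> u (0 + k) y\<bar> \<le> AA \<alpha> k * ((R powr (\<alpha> - real k) + R powr \<alpha>) * exp (-2*pi*R))"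
      using GG_bound[OF u, of \<xi> y \<alpha> k] pos[of y] y by (simp add: R_def)
    also have "(R powr (\<alpha> - real k) + R powr \<alpha>) * exp (-2*pi*R) \<le>
        (norm \<xi> / 2) powr (\<alpha> - real k) + (2 * norm \<xi>) powr \<alpha> * exp (- pi * norm \<xi>)"
    proof -
      have "R powr (\<alpha> - real k) * exp (-2*pi*R) \<le> R powr (\<alpha> - real k)"
        using R by (simp add: mult_left_le)
      also have "\<dots> \<le> (norm \<xi> / 2) powr (\<alpha> - real k)"
      proof (rule powr_mono2')
        show "\<alpha> - real k \<le> 0" using a by simp
        show "0 < norm \<xi> / 2" using far kt by linarith
        show "norm \<xi> / 2 \<le> R" using R by simp
      qed
      finally have 1: "R powr (\<alpha> - real k) * exp (-2*pi*R) \<le> (norm \<xi> / 2) powr (\<alpha> - real k)" .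
      have "R powr \<alpha> \<le> (2 * norm \<xi>) powr \<alpha>" using R a by (intro powr_mono2) auto
      moreover have "exp (-2*pi*R) \<le> exp (- pi * norm \<xi>)" using R pi_gt_zero by simp
      ultimately have 2: "R powr \<alpha> * exp (-2*pi*R) \<le> (2 * norm \<xi>) powr \<alpha> * exp (- pi * norm \<xi>)"
        by (intro mult_mono) auto
      show ?thesis using 1 2 by (simp add: distrib_right)
    qed
    hence "AA \<alpha> k * ((R powr (\<alpha> - real k) + R powr \<alpha>) * exp (-2*pi*R)) \<le>
        AA \<alpha> k * ((norm \<xi> / 2) powr (\<alpha> - real k) + (2 * norm \<xi>) powr \<alpha> * exp (- pi * norm \<xi>))"
      using AA0 by (intro mult_left_mono)
    finally show "\<bar>GG \<alpha> \<xi> u (0 + k) y\<bar> \<le> AA \<alpha> k * ((norm \<xi> / 2) powr (\<alpha> - real k) + (2 * norm \<xi>) powr \<alpha> * exp (- pi * norm \<xi>))" .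
  qed
  thus ?thesis by (simp add: Dk_def eq)
qed



lemma Dk_L1_bound:
  fixes u :: "'a::euclidean_space"
  assumes a: "\<alpha> > 0" and k: "real DIM('a) + \<alpha> < real k" "k \<ge> 1" and u: "norm u = 1" and t: "t > 0"
  defines "B \<equiv> (\<integral>\<^sup>+\<xi>. ennreal (norm \<xi> powr \<alpha> * exp (-pi*norm \<xi>)) \<partial>(lborel::'a measure))"
  shows "(\<integral>\<^sup>+\<xi>. ennreal \<bar>Dk \<alpha> u t k \<xi>\<bar> \<partial>lborel) \<le>
     ennreal (2^k * (3 * real k * t) powr \<alpha>) * ennreal (unit_ball_vol (DIM('a)) * (2 * real k * t) ^ DIM('a))
   + ennreal (t^k * AA \<alpha> k * 2 powr (real k - \<alpha>)) * ennreal (unit_ball_vol (DIM('a)) * 2^DIM('a) / (1 - 2 powr (real DIM('a) - (real k - \<alpha>))) * (2 * real k * t) powr (real DIM('a) - (real k - \<alpha>)))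
   + ennreal (t^k * AA \<alpha> k * 2 powr \<alpha>) * B"
proof -
  define a where "a = 2 * real k * t"
  have a0: "a > 0" using k t by (simp add: a_def)
  define c1 where "c1 = 2^k * (3 * real k * t) powr \<alpha>"
  define c2 where "c2 = t^k * AA \<alpha> k * 2 powr (real k - \<alpha>)"
  define c3 where "c3 = t^k * AA \<alpha> k * 2 powr \<alpha>"
  have AA0: "AA \<alpha> k \<ge> 0" unfolding AA_def by (intro sum_list_nonneg) auto
  have c1: "c1 \<ge> 0" and c2: "c2 \<ge> 0" and c3: "c3 \<ge> 0" using AA0 t by (auto simp: c1_def c2_def c3_def)
  define bnd where "bnd \<xi> = ennreal c1 * indicator (ball (0::'a) a) \<xi>
     + ennreal c2 * (indicator {\<xi>::'a. a \<le> norm \<xi>} \<xi> * ennreal (norm \<xi> powr (-(real k - \<alpha>))))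
     + ennreal c3 * ennreal (norm \<xi> powr \<alpha> * exp (-pi*norm \<xi>))" for \<xi>
  have p2: "2 powr (\<alpha> - real k) * 2 powr (real k - \<alpha>) = 1" by (simp add: powr_add[symmetric])
  have pt: "ennreal \<bar>Dk \<alpha> u t k \<xi>\<bar> \<le> bnd \<xi>" for \<xi>
  proof (cases "norm \<xi> < a")
    case True
    have "\<bar>Dk \<alpha> u t k \<xi>\<bar> \<le> 2^k * (norm \<xi> + real k * t) powr \<alpha>"
      using a u t by (intro Dk_near) auto
    also have "\<dots> \<le> c1" unfolding c1_def using True a t
      by (intro mult_left_mono powr_mono2) (auto simp: a_def algebra_simps)
    finally have "ennreal \<bar>Dk \<alpha> u t k \<xi>\<bar> \<le> ennreal c1 * indicator (ball (0::'a) a) \<xi>"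
      using True by (simp add: ennreal_leI)
    also have "\<dots> \<le> bnd \<xi>" unfolding bnd_def by (simp add: add.assoc)
    finally show ?thesis .
  next
    case False
    have "\<bar>Dk \<alpha> u t k \<xi>\<bar> \<le> t^k * (AA \<alpha> k * ((norm \<xi> / 2) powr (\<alpha> - real k) + (2 * norm \<xi>) powr \<alpha> * exp (- pi * norm \<xi>)))"
      using a u t k False by (intro Dk_far) (auto simp: a_def)
    also have "\<dots> = c2 * norm \<xi> powr (-(real k - \<alpha>)) + c3 * (norm \<xi> powr \<alpha> * exp (-pi*norm \<xi>))"
      using p2 by (simp add: c2_def c3_def powr_divide powr_mult powr_minus_divide field_simps)
    finally have "ennreal \<bar>Dk \<alpha> u t k \<xi>\<bar> \<le> ennreal (c2 * norm \<xi> powr (-(real k - \<alpha>))) + ennreal (c3 * (norm \<xi> powr \<alpha> * exp (-pi*norm \<xi>)))"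
      using c2 c3 by (simp add: ennreal_plus[symmetric] del: ennreal_plus)
    also have "\<dots> \<le> bnd \<xi>" unfolding bnd_def using False c2 c3 by (simp add: ennreal_mult')
    finally show ?thesis .
  qed
  have "(\<integral>\<^sup>+\<xi>. ennreal \<bar>Dk \<alpha> u t k \<xi>\<bar> \<partial>lborel) \<le> (\<integral>\<^sup>+\<xi>. bnd \<xi> \<partial>lborel)"
    by (intro nn_integral_mono pt)
  also have "(\<integral>\<^sup>+\<xi>. bnd \<xi> \<partial>lborel) = ennreal c1 * emeasure lborel (ball (0::'a) a)
     + ennreal c2 * (\<integral>\<^sup>+\<xi>. indicator {\<xi>::'a. a \<le> norm \<xi>} \<xi> * ennreal (norm \<xi> powr (-(real k - \<alpha>))) \<partial>lborel)
     + ennreal c3 * B"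
  proof -
    have m1: "(\<lambda>\<xi>. indicator (ball (0::'a) a) \<xi> :: ennreal) \<in> borel_measurable lborel"
      by (intro borel_measurable_indicator) auto
    have m2: "(\<lambda>\<xi>::'a. indicator {\<xi>::'a. a \<le> norm \<xi>} \<xi> * ennreal (norm \<xi> powr (-(real k - \<alpha>)))) \<in> borel_measurable lborel"
      by measurable
    have m3: "(\<lambda>\<xi>::'a. ennreal (norm \<xi> powr \<alpha> * exp (-pi*norm \<xi>))) \<in> borel_measurable lborel"
      by measurable
    have m1': "(\<lambda>\<xi>. ennreal c1 * indicator (ball (0::'a) a) \<xi>) \<in> borel_measurable lborel"
      using m1 by (rule borel_measurable_times_ennreal[OF borel_measurable_const])
    have m2': "(\<lambda>\<xi>::'a. ennreal c2 * (indicator {\<xi>::'a. a \<le> norm \<xi>} \<xi> * ennreal (norm \<xi> powr (-(real k - \<alpha>))))) \<in> borel_measurable lborel"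
      using m2 by (rule borel_measurable_times_ennreal[OF borel_measurable_const])
    have m3': "(\<lambda>\<xi>::'a. ennreal c3 * ennreal (norm \<xi> powr \<alpha> * exp (-pi*norm \<xi>))) \<in> borel_measurable lborel"
      using m3 by (rule borel_measurable_times_ennreal[OF borel_measurable_const])
    have m12: "(\<lambda>\<xi>. ennreal c1 * indicator (ball (0::'a) a) \<xi> + ennreal c2 * (indicator {\<xi>::'a. a \<le> norm \<xi>} \<xi> * ennreal (norm \<xi> powr (-(real k - \<alpha>))))) \<in> borel_measurable lborel"
      using m1' m2' by (rule borel_measurable_add)
    show ?thesis
      unfolding bnd_def
      by (simp only: nn_integral_add[OF m12 m3'] nn_integral_add[OF m1' m2'] nn_integral_cmult[OF m1] nn_integral_cmult[OF m2] nn_integral_cmult[OF m3] B_def)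
         (simp add: nn_integral_indicator)
  qed
  also have "\<dots> \<le> ennreal c1 * ennreal (unit_ball_vol (DIM('a)) * a ^ DIM('a))
     + ennreal c2 * ennreal (unit_ball_vol (DIM('a)) * 2^DIM('a) / (1 - 2 powr (real DIM('a) - (real k - \<alpha>))) * a powr (real DIM('a) - (real k - \<alpha>)))
     + ennreal c3 * B"
    using tail_nn[of "real k - \<alpha>" a, where 'a='a] k a0
    by (intro add_mono mult_left_mono) (auto simp: emeasure_ball)
  finally show ?thesis by (simp add: a_def c1_def c2_def c3_def)
qed



lemma norm_EE[simp]: "norm (EE s \<xi>) = 1"
  by (simp add: EE_def norm_exp_eq_Re)

lemma base_nn:
  fixes s :: "'a::euclidean_space"
  assumes a: "\<alpha> \<ge> 0"
  shows "(\<integral>\<^sup>+\<xi>. ennreal (norm (complex_of_real (fP \<alpha> \<xi>) * EE s \<xi>)) \<partial>lborel)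
      \<le> (\<integral>\<^sup>+\<xi>. ennreal (norm \<xi> powr \<alpha> * exp (-pi*norm \<xi>)) \<partial>(lborel::'a measure))"
proof (rule nn_integral_mono)
  fix \<xi> :: 'a
  have "exp (- 2 * pi * norm \<xi>) \<le> exp (-pi*norm \<xi>)" using pi_gt_zero by simp
  hence "\<bar>fP \<alpha> \<xi>\<bar> \<le> norm \<xi> powr \<alpha> * exp (-pi*norm \<xi>)"
    unfolding fP_def by (simp add: abs_mult mult_left_mono)
  thus "ennreal (norm (complex_of_real (fP \<alpha> \<xi>) * EE s \<xi>)) \<le> ennreal (norm \<xi> powr \<alpha> * exp (-pi*norm \<xi>))"
    by (simp add: norm_mult ennreal_leI)
qed

lemma base_int:
  fixes s :: "'a::euclidean_space"
  assumes a: "\<alpha> \<ge> 0"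
  shows "integrable lborel (\<lambda>\<xi>. complex_of_real (fP \<alpha> \<xi>) * EE s \<xi>)"
proof (rule integrableI_bounded)
  show "(\<lambda>\<xi>. complex_of_real (fP \<alpha> \<xi>) * EE s \<xi>) \<in> borel_measurable lborel" by measurable
  show "(\<integral>\<^sup>+\<xi>. ennreal (norm (complex_of_real (fP \<alpha> \<xi>) * EE s \<xi>)) \<partial>lborel) < \<infinity>"
    using base_nn[OF a, of s] expdecay_nn_finite[OF a, where 'a='a] by (rule le_less_trans)
qed

lemma rp_bounded:
  fixes s :: "'a::euclidean_space"
  assumes a: "\<alpha> \<ge> 0"
  shows "ennreal (norm (riesz_poisson \<alpha> s)) \<le> (\<integral>\<^sup>+\<xi>. ennreal (norm \<xi> powr \<alpha> * exp (-pi*norm \<xi>)) \<partial>(lborel::'a measure))"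
  unfolding rp_eq
  using integral_norm_bound_ennreal[OF base_int[OF a, of s]] base_nn[OF a, of s] by (rule order.trans)

lemma step2:
  fixes t V K A Bf \<alpha> :: real and k d :: nat
  assumes t: "0 < t" "t \<le> 1" and kd: "real d + \<alpha> \<le> real k" and nn: "V \<ge> 0" "K \<ge> 0" "A \<ge> 0" "Bf \<ge> 0"
  shows "2^k * (3 * real k * t) powr \<alpha> * (V * (2 * real k * t) ^ d)
       + t^k * A * 2 powr (real k - \<alpha>) * (K * (2 * real k * t) powr (real d - (real k - \<alpha>)))
       + t^k * A * 2 powr \<alpha> * Bf
     \<le> (2^k * (3 * real k) powr \<alpha> * V * (2 * real k)^d
        + A * 2 powr (real k - \<alpha>) * K * (2 * real k) powr (real d - (real k - \<alpha>))
        + A * 2 powr \<alpha> * Bf) * t powr (real d + \<alpha>)"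
proof -
  have e1: "2^k * (3 * real k * t) powr \<alpha> * (V * (2 * real k * t) ^ d)
     = 2^k * (3 * real k) powr \<alpha> * V * (2 * real k)^d * t powr (real d + \<alpha>)"
  proof -
    have "(3 * real k * t) powr \<alpha> = (3 * real k) powr \<alpha> * t powr \<alpha>" using t by (simp add: powr_mult)
    moreover have "(2 * real k * t) ^ d = (2 * real k)^d * t^d" by (simp add: power_mult_distrib)
    moreover have "t^d * t powr \<alpha> = t powr (real d + \<alpha>)" using t by (simp add: powr_add powr_realpow)
    ultimately show ?thesis by (simp add: mult_ac)
  qed
  have e2: "t^k * A * 2 powr (real k - \<alpha>) * (K * (2 * real k * t) powr (real d - (real k - \<alpha>)))
     = A * 2 powr (real k - \<alpha>) * K * (2 * real k) powr (real d - (real k - \<alpha>)) * t powr (real d + \<alpha>)"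
  proof -
    have "(2 * real k * t) powr (real d - (real k - \<alpha>)) = (2 * real k) powr (real d - (real k - \<alpha>)) * t powr (real d - (real k - \<alpha>))"
      using t by (simp add: powr_mult)
    moreover have "t^k * t powr (real d - (real k - \<alpha>)) = t powr (real d + \<alpha>)"
      using t by (simp add: powr_add[symmetric] powr_realpow[symmetric])
    ultimately show ?thesis by (simp add: mult_ac)
  qed
  have e3: "t^k * A * 2 powr \<alpha> * Bf \<le> A * 2 powr \<alpha> * Bf * t powr (real d + \<alpha>)"
  proof -
    have "t^k = t powr real k" using t by (simp add: powr_realpow)
    also have "\<dots> \<le> t powr (real d + \<alpha>)" using t kd by (intro powr_mono') auto
    finally have "t^k \<le> t powr (real d + \<alpha>)" .
    hence "t^k * (A * 2 powr \<alpha> * Bf) \<le> t powr (real d + \<alpha>) * (A * 2 powr \<alpha> * Bf)"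
      using nn by (intro mult_right_mono) auto
    thus ?thesis by (simp add: mult_ac)
  qed
  show ?thesis unfolding e1 e2 distrib_right using e3 by linarith
qed

lemma decay:
  assumes a: "\<alpha> > 0"
  shows "\<exists>C. \<forall>s::'a::euclidean_space. 1 \<le> norm s \<longrightarrow> norm (riesz_poisson \<alpha> s) \<le> C * norm s powr (-(real DIM('a) + \<alpha>))"
proof -
  define d where "d = DIM('a)"
  define k where "k = d + nat \<lceil>\<alpha>\<rceil> + 1"
  have kd: "real d + \<alpha> < real k" unfolding k_def by linarith
  have k1: "k \<ge> 1" unfolding k_def by simp
  define B where "B = (\<integral>\<^sup>+\<xi>. ennreal (norm \<xi> powr \<alpha> * exp (-pi*norm \<xi>)) \<partial>(lborel::'a measure))"
  have Bfin: "B < \<infinity>" unfolding B_def using a by (intro expdecay_nn_finite) auto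
  define Bf where "Bf = enn2real B"
  have BBf: "B = ennreal Bf" and Bf0: "Bf \<ge> 0" using Bfin by (auto simp: Bf_def less_top[symmetric])
  define V where "V = unit_ball_vol (real d)"
  have V0: "V \<ge> 0" by (simp add: V_def unit_ball_vol_nonneg)
  define q where "q = 2 powr (real d - (real k - \<alpha>))"
  have "2 powr (real d - (real k - \<alpha>)) < 2 powr 0" using kd by (intro powr_less_mono) auto
  hence q1: "q < 1" by (simp add: q_def)
  define K where "K = V * 2^d / (1 - q)"
  have K0: "K \<ge> 0" using V0 q1 by (simp add: K_def)
  define A where "A = AA \<alpha> k"
  have A0: "A \<ge> 0" unfolding A_def AA_def by (intro sum_list_nonneg) auto
  define Cst where "Cst = 2^k * (3 * real k) powr \<alpha> * V * (2 * real k)^d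
        + A * 2 powr (real k - \<alpha>) * K * (2 * real k) powr (real d - (real k - \<alpha>))
        + A * 2 powr \<alpha> * Bf"
  show ?thesis
  proof (intro exI[of _ "Cst * 2 powr (-(real d + \<alpha>)) / 2^k"] allI impI)
    fix s :: 'a assume s1: "1 \<le> norm s"
    define t where "t = 1 / (2 * norm s)"
    define u where "u = (1 / norm s) *\<^sub>R s"
    have s0: "s \<noteq> 0" using s1 by (metis norm_zero not_one_le_zero)
    have t0: "0 < t" using s1 by (auto simp: t_def)
    have t1: "t \<le> 1" using s1 by (simp add: t_def divide_simps)
    have u1: "norm u = 1" using s0 by (simp add: u_def)
    have "s \<bullet> (t *\<^sub>R u) = t * norm s" using s0
      by (simp add: u_def inner_commute power2_norm_eq_inner[symmetric] power2_eq_square)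
    also have "\<dots> = 1/2" using s0 by (simp add: t_def)
    finally have su: "s \<bullet> (t *\<^sub>R u) = 1/2" .
    have half: "exp (2 * pi * \<i> * complex_of_real (s \<bullet> (t *\<^sub>R u))) = -1"
    proof -
      have "exp (2 * pi * \<i> * complex_of_real (s \<bullet> (t *\<^sub>R u))) = exp (\<i> * of_real pi)"
        unfolding su by (intro arg_cong[where f=exp]) simp
      thus ?thesis by simp
    qed
    define F where "F = riesz_poisson \<alpha> s"
    note DI = Dk_integral[OF base_int[of \<alpha> s] half, of k]
    have "ennreal (2^k * norm F) = ennreal (norm (LINT \<xi>|lborel. complex_of_real (Dk \<alpha> u t k \<xi>) * EE s \<xi>))"
      using DI a by (simp add: F_def rp_eq norm_mult norm_power)
    also have "\<dots> \<le> (\<integral>\<^sup>+\<xi>. ennreal (norm (complex_of_real (Dk \<alpha> u t k \<xi>) * EE s \<xi>)) \<partial>lborel)"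
      using DI a by (intro integral_norm_bound_ennreal) auto
    also have "\<dots> = (\<integral>\<^sup>+\<xi>. ennreal \<bar>Dk \<alpha> u t k \<xi>\<bar> \<partial>lborel)"
      by (simp add: norm_mult)
    also have "\<dots> \<le> ennreal (2^k * (3 * real k * t) powr \<alpha>) * ennreal (V * (2 * real k * t) ^ d)
       + ennreal (t^k * A * 2 powr (real k - \<alpha>)) * ennreal (K * (2 * real k * t) powr (real d - (real k - \<alpha>)))
       + ennreal (t^k * A * 2 powr \<alpha>) * ennreal Bf"
      using Dk_L1_bound[OF a _ k1 u1 t0, unfolded B_def[symmetric] BBf] kd
      by (simp add: d_def V_def K_def q_def A_def)
    also have "\<dots> = ennreal (2^k * (3 * real k * t) powr \<alpha> * (V * (2 * real k * t) ^ d)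
       + t^k * A * 2 powr (real k - \<alpha>) * (K * (2 * real k * t) powr (real d - (real k - \<alpha>)))
       + t^k * A * 2 powr \<alpha> * Bf)"
      using V0 K0 A0 Bf0 t0 by (simp add: ennreal_mult'[symmetric] ennreal_plus[symmetric] del: ennreal_plus)
    also have "\<dots> \<le> ennreal (Cst * t powr (real d + \<alpha>))"
      unfolding Cst_def using step2[OF t0 t1 _ V0 K0 A0 Bf0, of d \<alpha> k] kd by (intro ennreal_leI) auto
    finally have "2^k * norm F \<le> Cst * t powr (real d + \<alpha>)"
      by (rule ennreal_le_iff[THEN iffD1, rotated]) (simp add: Cst_def V0 K0 A0 Bf0)
    moreover have "t powr (real d + \<alpha>) = 2 powr (-(real d + \<alpha>)) * norm s powr (-(real d + \<alpha>))"
      using s0 powr_minus_divide[of 2 "real d + \<alpha>"] powr_minus_divide[of "norm s" "real d + \<alpha>"] by (simp add: t_def powr_divide powr_mult)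
    ultimately have "2^k * norm F \<le> Cst * 2 powr (-(real d + \<alpha>)) * norm s powr (-(real d + \<alpha>))"
      by (simp add: mult_ac)
    thus "norm (riesz_poisson \<alpha> s) \<le> Cst * 2 powr (-(real d + \<alpha>)) / 2^k * norm s powr (-(real DIM('a) + \<alpha>))"
      by (simp add: F_def d_def field_simps)
  qed
qed



theorem lemma6p1:
  fixes \<alpha> :: real
  assumes "\<alpha> > 0"
  shows "\<exists>\<sigma>>0. \<exists>C::real. AE s in (lborel :: 'a::euclidean_space measure).
           (1 + (norm s)\<^sup>2) powr ((real DIM('a) + \<sigma>) / 2) * norm (riesz_poisson \<alpha> s) \<le> C"
proof -
  have a: "\<alpha> > 0" by fact
  define g where "g = real DIM('a) + \<alpha>"
  have g0: "g > 0" using a by (simp add: g_def)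
  obtain C where C: "\<And>s::'a. 1 \<le> norm s \<Longrightarrow> norm (riesz_poisson \<alpha> s) \<le> C * norm s powr (- g)"
    using decay[OF a, where 'a='a] unfolding g_def by blast
  define B where "B = (\<integral>\<^sup>+\<xi>. ennreal (norm \<xi> powr \<alpha> * exp (-pi*norm \<xi>)) \<partial>(lborel::'a measure))"
  have Bfin: "B < \<infinity>" unfolding B_def using a by (intro expdecay_nn_finite) auto
  define Bf where "Bf = enn2real B"
  have BBf: "B = ennreal Bf" and Bf0: "Bf \<ge> 0" using Bfin by (auto simp: Bf_def less_top[symmetric])
  have bnd: "norm (riesz_poisson \<alpha> s) \<le> Bf" for s :: 'a
    using rp_bounded[of \<alpha> s] a unfolding B_def[symmetric] BBf by (simp add: Bf0)
  define M where "M = max Bf C"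
  have M0: "M \<ge> 0" using Bf0 by (simp add: M_def)
  have main: "(1 + (norm s)\<^sup>2) powr (g / 2) * norm (riesz_poisson \<alpha> s) \<le> 2 powr (g / 2) * M" for s :: 'a
  proof (cases "norm s < 1")
    case True
    have "(1 + (norm s)\<^sup>2) \<le> 2" using True by (simp add: abs_square_le_1 power2_eq_square mult_le_one)
    hence "(1 + (norm s)\<^sup>2) powr (g / 2) \<le> 2 powr (g / 2)" using g0 by (intro powr_mono2) auto
    moreover have "norm (riesz_poisson \<alpha> s) \<le> M" using bnd[of s] by (simp add: M_def)
    ultimately show ?thesis using M0 by (intro mult_mono) auto
  next
    case False
    hence s1: "1 \<le> norm s" by simp
    have "(1 + (norm s)\<^sup>2) \<le> 2 * (norm s)\<^sup>2" using s1 by (simp add: power2_eq_square)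
      (metis mult_mono' norm_ge_zero order.trans zero_le_one mult_1 linorder_not_le less_le_not_le)
    hence "(1 + (norm s)\<^sup>2) powr (g / 2) \<le> (2 * (norm s)\<^sup>2) powr (g / 2)" using g0 by (intro powr_mono2) auto
    also have "\<dots> = 2 powr (g / 2) * norm s powr g"
    proof -
      have sq: "(norm s)\<^sup>2 = norm s powr 2" using s1 by (simp add: powr_realpow)
      have "((norm s)\<^sup>2) powr (g / 2) = norm s powr g" by (subst sq) (simp only: powr_powr, simp)
      thus ?thesis by (simp add: powr_mult)
    qed
    finally have p: "(1 + (norm s)\<^sup>2) powr (g / 2) \<le> 2 powr (g / 2) * norm s powr g" .
    have "(1 + (norm s)\<^sup>2) powr (g / 2) * norm (riesz_poisson \<alpha> s) \<le> (2 powr (g / 2) * norm s powr g) * (C * norm s powr (- g))"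
      using p C[OF s1] by (intro mult_mono) auto
    also have "\<dots> = 2 powr (g / 2) * C"
    proof -
      have "s \<noteq> 0" using s1 by (metis norm_zero not_one_le_zero)
      hence "norm s powr g * norm s powr (- g) = 1" by (simp add: powr_add[symmetric])
      thus ?thesis by (simp add: mult_ac)
    qed
    also have "\<dots> \<le> 2 powr (g / 2) * M" by (simp add: M_def)
    finally show ?thesis .
  qed
  show ?thesis
    by (intro exI[of _ \<alpha>] conjI a exI[of _ "2 powr (g / 2) * M"] AE_I2) (use main in \<open>simp add: g_def\<close>)
qed


end
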